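(* Let $\kappa$ be a regular uncountable cardinal and $I$ a $\kappa$-complete normal ideal on $\kappa$ such that the Boolean algebra $P(\kappa)/I$ is isomorphic to $\mathbb{B}(\mathrm{Add}(\omega,\lambda))$ for some cardinal $\lambda$. Then $I$ is 2-precipitous.
   Context: $\mathrm{Add}(\omega,\lambda)$ is the poset adding $\lambda$ Cohen reals (finite partial functions from $\lambda\times\omega$ to $2$, ordered by reverse inclusion), and $\mathbb{B}(\mathbb{P})$ denotes the complete Boolean algebra generated by a poset $\mathbb{P}$. Normal: closed under diagonal unions of $\kappa$-sequences. The game $G_I$: Players Empty and Nonempty alternate, Empty moving first, producing a coordinatewise $\subseteq$-decreasing sequence $\langle (A_n,B_n):n\in\omega\rangle$ of pairs of $I$-positive sets; Nonempty wins iff there exist $\alpha<\beta$ with $\alpha\in\bigcap_n A_n$, $\beta\in\bigcap_n B_n$. $I$ is 2-precipitous if Empty has no winning strategy in $G_I$. *)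

theory Defs
  imports Main
begin

text \<open>The cardinal kappa is represented by a cardinal well-order r (a relation, as in the
BNF cardinal library of Main) on the set Field r; alpha < beta means (alpha,beta) in r and
alpha differs from beta.\<close>

definition strict_lt :: "'a rel \<Rightarrow> 'a \<Rightarrow> 'a \<Rightarrow> bool" where
  "strict_lt r a b \<longleftrightarrow> (a, b) \<in> r \<and> a \<noteq> b"

definition ideal_on :: "'a rel \<Rightarrow> 'a set set \<Rightarrow> bool" where
  "ideal_on r I \<longleftrightarrow>
     I \<subseteq> Pow (Field r) \<and> {} \<in> I \<and> Field r \<notin> I \<and>
     (\<forall>A B. A \<in> I \<and> B \<subseteq> A \<longrightarrow> B \<in> I) \<and>
     (\<forall>A B. A \<in> I \<and> B \<in> I \<longrightarrow> A \<union> B \<in> I) \<and>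
     (\<forall>a \<in> Field r. {a} \<in> I)"

definition kappa_complete :: "'a rel \<Rightarrow> 'a set set \<Rightarrow> bool" where
  "kappa_complete r I \<longleftrightarrow> (\<forall>F. F \<subseteq> I \<and> (card_of F, r) \<in> ordLess \<longrightarrow> \<Union>F \<in> I)"

definition diag_union :: "'a rel \<Rightarrow> ('a \<Rightarrow> 'a set) \<Rightarrow> 'a set" where
  "diag_union r X = {b \<in> Field r. \<exists>a \<in> Field r. strict_lt r a b \<and> b \<in> X a}"

definition normal_ideal :: "'a rel \<Rightarrow> 'a set set \<Rightarrow> bool" where
  "normal_ideal r I \<longleftrightarrow> (\<forall>X. (\<forall>a \<in> Field r. X a \<in> I) \<longrightarrow> diag_union r X \<in> I)"

text \<open>Add(omega, lambda): finite partial functions from L x omega to 2, with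
p \<le> q iff p extends q (reverse inclusion).\<close>
definition Add_conds :: "'l set \<Rightarrow> ('l \<times> nat \<rightharpoonup> bool) set" where
  "Add_conds L = {p. finite (dom p) \<and> dom p \<subseteq> L \<times> UNIV}"

definition Add_le :: "('l \<times> nat \<rightharpoonup> bool) \<Rightarrow> ('l \<times> nat \<rightharpoonup> bool) \<Rightarrow> bool" where
  "Add_le p q \<longleftrightarrow> q \<subseteq>\<^sub>m p"

text \<open>The complete Boolean algebra B(P) of a poset (P, le), realised as its regular open
algebra: regular open subsets of P in the topology of downward closed sets, ordered by
inclusion.\<close>
definition regular_open :: "'p set \<Rightarrow> ('p \<Rightarrow> 'p \<Rightarrow> bool) \<Rightarrow> 'p set \<Rightarrow> bool" where
  "regular_open P le U \<longleftrightarrow> U \<subseteq> P \<and>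
     (\<forall>p \<in> P. p \<in> U \<longleftrightarrow> (\<forall>q \<in> P. le q p \<longrightarrow> (\<exists>s \<in> U. le s q)))"

definition RO :: "'p set \<Rightarrow> ('p \<Rightarrow> 'p \<Rightarrow> bool) \<Rightarrow> 'p set set" where
  "RO P le = {U. regular_open P le U}"

text \<open>P(kappa)/I is isomorphic (as a Boolean algebra, equivalently as a partial order)
to the Boolean algebra B: there is a map from P(kappa) onto B inducing an order
isomorphism of the quotient, where [A] \<le> [B] iff A - B \<in> I.\<close>
definition quotient_iso :: "'a set \<Rightarrow> 'a set set \<Rightarrow> 'b set set \<Rightarrow> bool" where
  "quotient_iso K I Bs \<longleftrightarrow> (\<exists>f. (\<forall>A \<subseteq> K. f A \<in> Bs) \<and> (\<forall>U \<in> Bs. \<exists>A \<subseteq> K. f A = U) \<and>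
      (\<forall>A B. A \<subseteq> K \<and> B \<subseteq> K \<longrightarrow> (A - B \<in> I \<longleftrightarrow> f A \<subseteq> f B)))"

text \<open>A move is a pair (A,B); moves are indexed 0,1,2,...; Empty makes the
even-numbered moves and Nonempty the odd ones.\<close>
definition legal_move :: "'a rel \<Rightarrow> 'a set set \<Rightarrow> ('a set \<times> 'a set) list \<Rightarrow> 'a set \<times> 'a set \<Rightarrow> bool" where
  "legal_move r I h m \<longleftrightarrow>
     fst m \<subseteq> Field r \<and> snd m \<subseteq> Field r \<and> fst m \<notin> I \<and> snd m \<notin> I \<and>
     (h \<noteq> [] \<longrightarrow> fst m \<subseteq> fst (last h) \<and> snd m \<subseteq> snd (last h))"

definition legal_history :: "'a rel \<Rightarrow> 'a set set \<Rightarrow> ('a set \<times> 'a set) list \<Rightarrow> bool" where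
  "legal_history r I h \<longleftrightarrow> (\<forall>n < length h. legal_move r I (take n h) (h ! n))"

text \<open>A strategy for Empty maps histories of even length to Empty's next move.\<close>
definition follows_history :: "(('a set \<times> 'a set) list \<Rightarrow> 'a set \<times> 'a set) \<Rightarrow> ('a set \<times> 'a set) list \<Rightarrow> bool" where
  "follows_history \<sigma> h \<longleftrightarrow> (\<forall>n < length h. even n \<longrightarrow> h ! n = \<sigma> (take n h))"

definition nonempty_wins :: "'a rel \<Rightarrow> (nat \<Rightarrow> 'a set \<times> 'a set) \<Rightarrow> bool" where
  "nonempty_wins r play \<longleftrightarrow>
     (\<exists>a b. strict_lt r a b \<and> a \<in> (\<Inter>n. fst (play n)) \<and> b \<in> (\<Inter>n. snd (play n)))"

definition empty_winning_strategy :: "'a rel \<Rightarrow> 'a set set \<Rightarrow> (('a set \<times> 'a set) list \<Rightarrow> 'a set \<times> 'a set) \<Rightarrow> bool" where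
  "empty_winning_strategy r I \<sigma> \<longleftrightarrow>
     (\<forall>h. legal_history r I h \<and> follows_history \<sigma> h \<and> even (length h) \<longrightarrow> legal_move r I h (\<sigma> h)) \<and>
     (\<forall>play. (\<forall>n. legal_move r I (map play [0..<n]) (play n)) \<and>
             (\<forall>n. even n \<longrightarrow> play n = \<sigma> (map play [0..<n])) \<longrightarrow> \<not> nonempty_wins r play)"

definition two_precipitous :: "'a rel \<Rightarrow> 'a set set \<Rightarrow> bool" where
  "two_precipitous r I \<longleftrightarrow> \<not> (\<exists>\<sigma>. empty_winning_strategy r I \<sigma>)"

end

theory Submission
  imports Defs "HOL-Library.Countable_Set"
begin

unbundle cardinal_syntax

lemma countable_ordLess:
  assumes "countable F" and "(natLeq, r) \<in> ordLess"
  shows "( |F|, r) \<in> ordLess"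
proof -
  have "|F| \<le>o |UNIV::nat set|"
    using assms(1) unfolding card_of_ordLeq[symmetric]
    by (meson countable_def top_greatest)
  hence "|F| \<le>o natLeq" using card_of_nat ordLeq_ordIso_trans by blast
  thus ?thesis using assms(2) ordLeq_ordLess_trans by blast
qed

lemma ccI:
  assumes "kappa_complete r I" "(natLeq, r) \<in> ordLess" "countable F" "F \<subseteq> I"
  shows "\<Union>F \<in> I"
  using assms countable_ordLess unfolding kappa_complete_def by blast

lemma bounded_in_I:
  assumes "Card_order r" "kappa_complete r I" "ideal_on r I" "a \<in> Field r"
  shows "under r a \<in> I"
proof -
  let ?F = "(\<lambda>b. {b}) ` underS r a"
  have "|?F| \<le>o |underS r a|" by (rule card_of_image)
  hence "( |?F|, r) \<in> ordLess" using card_of_underS[OF assms(1,4)] ordLeq_ordLess_trans by blast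
  moreover have "?F \<subseteq> I" using assms(3) unfolding ideal_on_def underS_def
    by (auto simp: Field_def)
  ultimately have "\<Union>?F \<in> I" using assms(2) unfolding kappa_complete_def by blast
  hence "underS r a \<union> {a} \<in> I" using assms(3,4) unfolding ideal_on_def by blast
  moreover have "under r a \<subseteq> underS r a \<union> {a}" unfolding under_def underS_def by auto
  ultimately show ?thesis using assms(3) unfolding ideal_on_def by blast
qed

definition cone :: "'l set \<Rightarrow> ('l \<times> nat \<rightharpoonup> bool) \<Rightarrow> ('l \<times> nat \<rightharpoonup> bool) set" where
  "cone L s = {q \<in> Add_conds L. Add_le q s}"

lemma Add_le_refl: "Add_le p p" unfolding Add_le_def by simp

lemma Add_le_trans: "Add_le p q \<Longrightarrow> Add_le q s \<Longrightarrow> Add_le p s"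
  unfolding Add_le_def using map_le_trans by blast

lemma ro_sub: "regular_open P le U \<Longrightarrow> U \<subseteq> P"
  unfolding regular_open_def by blast

lemma ro_down:
  assumes "regular_open (Add_conds L) Add_le U" "p \<in> U" "q \<in> Add_conds L" "Add_le q p"
  shows "q \<in> U"
proof -
  have "\<forall>q'\<in>Add_conds L. Add_le q' q \<longrightarrow> (\<exists>s\<in>U. Add_le s q')"
    using assms unfolding regular_open_def by (meson Add_le_trans subsetD)
  thus ?thesis using assms unfolding regular_open_def by blast
qed

lemma ro_notin:
  assumes "regular_open P le U" "p \<in> P" "p \<notin> U"
  shows "\<exists>q\<in>P. le q p \<and> (\<forall>s\<in>U. \<not> le s q)"
  using assms unfolding regular_open_def by blast

lemma empty_ro: "regular_open (Add_conds L) Add_le {}"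
  unfolding regular_open_def using Add_le_refl by blast

lemma cone_ro:
  assumes s: "s \<in> Add_conds L"
  shows "regular_open (Add_conds L) Add_le (cone L s)"
  unfolding regular_open_def
proof (rule conjI)
  show "cone L s \<subseteq> Add_conds L" unfolding cone_def by blast
next
 show "\<forall>p\<in>Add_conds L. (p \<in> cone L s) = (\<forall>q\<in>Add_conds L. Add_le q p \<longrightarrow> (\<exists>s'\<in>cone L s. Add_le s' q))"
 proof (rule ballI, rule iffI)
  fix p assume "p \<in> cone L s"
  thus "\<forall>q\<in>Add_conds L. Add_le q p \<longrightarrow> (\<exists>t\<in>cone L s. Add_le t q)"
    unfolding cone_def using Add_le_refl Add_le_trans by blast
next
  fix p assume p: "p \<in> Add_conds L"
    and H: "\<forall>q\<in>Add_conds L. Add_le q p \<longrightarrow> (\<exists>t\<in>cone L s. Add_le t q)"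
  show "p \<in> cone L s"
  proof (rule ccontr)
    assume np: "p \<notin> cone L s"
    hence "\<not> s \<subseteq>\<^sub>m p" using p unfolding cone_def Add_le_def by blast
    then obtain x where x: "x \<in> dom s" "s x \<noteq> p x" unfolding map_le_def by blast
    show False
    proof (cases "x \<in> dom p")
      case True
      from H p obtain t where t: "t \<in> cone L s" "Add_le t p" using Add_le_refl by blast
      hence "s \<subseteq>\<^sub>m t" "p \<subseteq>\<^sub>m t" unfolding cone_def Add_le_def by auto
      thus False using x True unfolding map_le_def by metis
    next
      case False
      obtain b where b: "s x = Some b" using x by auto
      let ?q = "p(x \<mapsto> \<not> b)"
      have "?q \<in> Add_conds L" using p s x unfolding Add_conds_def by auto
      moreover have "Add_le ?q p" using False unfolding Add_le_def map_le_def by auto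
      ultimately obtain t where t: "t \<in> cone L s" "Add_le t ?q" using H by blast
      hence "s \<subseteq>\<^sub>m t" "?q \<subseteq>\<^sub>m t" unfolding cone_def Add_le_def by auto
      hence "t x = Some b" "t x = Some (\<not> b)" using b x unfolding map_le_def
        by (metis domIff option.distinct(1), metis domIff fun_upd_same option.distinct(1))
      thus False by simp
    qed
  qed
 qed
qed

lemma comb:
  assumes q: "q \<in> Add_conds L" and e: "e \<in> Add_conds L"
    and qe: "q |` (S \<times> UNIV) \<subseteq>\<^sub>m e" and de: "dom e \<subseteq> S \<times> UNIV"
  shows "q ++ e \<in> Add_conds L" "Add_le (q ++ e) e" "Add_le (q ++ e) q"
proof -
  show "q ++ e \<in> Add_conds L" using q e unfolding Add_conds_def by auto
  show "Add_le (q ++ e) e" unfolding Add_le_def by (rule map_le_map_add)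
  show "Add_le (q ++ e) q" unfolding Add_le_def map_le_def
  proof
    fix x assume x: "x \<in> dom q"
    show "q x = (q ++ e) x"
    proof (cases "x \<in> dom e")
      case True
      hence "x \<in> S \<times> UNIV" using de by blast
      hence "(q |` (S \<times> UNIV)) x = q x" by simp
      moreover have "x \<in> dom (q |` (S \<times> UNIV))" using x \<open>x \<in> S \<times> UNIV\<close> by simp
      ultimately have "q x = e x" using qe unfolding map_le_def by metis
      thus ?thesis using True by (auto simp: map_add_def split: option.splits)
    next
      case False thus ?thesis by (auto simp: map_add_def split: option.splits)
    qed
  qed
qed

definition PS :: "'l set \<Rightarrow> 'l set \<Rightarrow> ('l \<times> nat \<rightharpoonup> bool) set" where
  "PS L S = {p \<in> Add_conds L. dom p \<subseteq> S \<times> UNIV}"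

lemma countable_PS:
  assumes "countable S" shows "countable (PS L S)"
proof -
  have cS: "countable ((S \<times> (UNIV::nat set)) \<times> (UNIV::bool set))" using assms by simp
  have "countable {A. finite A \<and> A \<subseteq> (S \<times> (UNIV::nat set)) \<times> (UNIV::bool set)}"
    using countable_Collect_finite_subset[OF cS] .
  moreover have "Map.graph ` PS L S \<subseteq> {A. finite A \<and> A \<subseteq> (S \<times> (UNIV::nat set)) \<times> (UNIV::bool set)}"
  proof
    fix A assume "A \<in> Map.graph ` PS L S"
    then obtain p where p: "p \<in> PS L S" "A = Map.graph p" by blast
    have "finite (Map.graph p)" using p unfolding PS_def Add_conds_def by (simp add: graph_eq_to_snd_dom)
    moreover have "Map.graph p \<subseteq> (S \<times> UNIV) \<times> UNIV" using p unfolding PS_def graph_def by auto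
    ultimately show "A \<in> {A. finite A \<and> A \<subseteq> (S \<times> (UNIV::nat set)) \<times> (UNIV::bool set)}" using p by auto
  qed
  ultimately have "countable (Map.graph ` PS L S)" using countable_subset by blast
  moreover have "inj_on Map.graph (PS L S)"
  proof (rule inj_onI)
    fix p q assume eq: "Map.graph p = Map.graph q"
    show "p = q"
    proof (rule ext)
      fix x show "p x = q x"
        using eq in_graphD in_graphI by (metis not_None_eq)
    qed
  qed
  ultimately show ?thesis using countable_image_inj_on by blast
qed

lemma chain_fin:
  assumes inc: "\<And>n. C n \<subseteq> C (Suc n)" and fin: "finite F" and sub: "F \<subseteq> (\<Union>n. C n)"
  shows "\<exists>n. F \<subseteq> C n"
  using fin sub
proof (induction F rule: finite_induct)
  case empty thus ?case by blast
next
  case (insert x F)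
  then obtain n where n: "F \<subseteq> C n" by blast
  obtain m where m: "x \<in> C m" using insert.prems by blast
  have "C n \<subseteq> C (max n m)" "C m \<subseteq> C (max n m)"
    using lift_Suc_mono_le[of C, OF inc] by auto
  thus ?case using n m by blast
qed

lemma restr_PS:
  assumes "q \<in> Add_conds L"
  shows "q |` (S \<times> UNIV) \<in> PS L S" "Add_le q (q |` (S \<times> UNIV))"
proof -
  have "dom (q |` (S \<times> UNIV)) \<subseteq> dom q" by auto
  thus "q |` (S \<times> UNIV) \<in> PS L S" using assms unfolding PS_def Add_conds_def
    by (auto intro: finite_subset simp: restrict_map_def split: if_splits)
  show "Add_le q (q |` (S \<times> UNIV))" unfolding Add_le_def map_le_def
    by (auto simp: restrict_map_def split: if_splits)
qed

lemma fst_sub: "fst ` D \<subseteq> S \<Longrightarrow> D \<subseteq> S \<times> UNIV"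
proof
  fix x assume "fst ` D \<subseteq> S" "x \<in> D"
  hence "fst x \<in> S" by blast
  thus "x \<in> S \<times> UNIV" by (cases x) auto
qed

locale cohen_setup =
  fixes K :: "'a set" and I :: "'a set set" and L :: "'l set"
    and f :: "'a set \<Rightarrow> ('l \<times> nat \<rightharpoonup> bool) set"
  assumes emptyI: "{} \<in> I" and downI: "A \<in> I \<Longrightarrow> B \<subseteq> A \<Longrightarrow> B \<in> I"
    and unI: "A \<in> I \<Longrightarrow> B \<in> I \<Longrightarrow> A \<union> B \<in> I"
    and ccI: "countable F \<Longrightarrow> F \<subseteq> I \<Longrightarrow> \<Union>F \<in> I"
    and fRO: "X \<subseteq> K \<Longrightarrow> regular_open (Add_conds L) Add_le (f X)"
    and fsurj: "regular_open (Add_conds L) Add_le U \<Longrightarrow> \<exists>X\<subseteq>K. f X = U"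
    and fiso: "X \<subseteq> K \<Longrightarrow> Y \<subseteq> K \<Longrightarrow> (X - Y \<in> I \<longleftrightarrow> f X \<subseteq> f Y)"
begin

lemma f_empty: "f {} = {}"
proof -
  obtain X where "X \<subseteq> K" "f X = {}" using fsurj[OF empty_ro] by blast
  thus ?thesis using fiso[of "{}" X] emptyI by auto
qed

lemma f_sub: "X \<subseteq> K \<Longrightarrow> f X \<subseteq> Add_conds L"
  using fRO ro_sub by blast

lemma f_mono: "X \<subseteq> Y \<Longrightarrow> Y \<subseteq> K \<Longrightarrow> f X \<subseteq> f Y"
  using fiso[of X Y] emptyI by (metis Diff_eq_empty_iff subset_trans)

lemma f_pos: "X \<subseteq> K \<Longrightarrow> X \<notin> I \<Longrightarrow> f X \<noteq> {}"
  using fiso[of X "{}"] f_empty by auto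

lemma f_down: "X \<subseteq> K \<Longrightarrow> p \<in> f X \<Longrightarrow> q \<in> Add_conds L \<Longrightarrow> Add_le q p \<Longrightarrow> q \<in> f X"
  using fRO ro_down by blast

definition Zc :: "('l \<times> nat \<rightharpoonup> bool) \<Rightarrow> 'a set" where
  "Zc s = (SOME X. X \<subseteq> K \<and> f X = cone L s)"

lemma Zc: assumes "s \<in> Add_conds L" shows "Zc s \<subseteq> K" "f (Zc s) = cone L s"
proof -
  have "\<exists>X. X \<subseteq> K \<and> f X = cone L s" using fsurj[OF cone_ro[OF assms]] by blast
  hence "Zc s \<subseteq> K \<and> f (Zc s) = cone L s" unfolding Zc_def by (rule someI_ex)
  thus "Zc s \<subseteq> K" "f (Zc s) = cone L s" by auto
qed

lemma f_int:
  assumes X: "X \<subseteq> K" and Y: "Y \<subseteq> K" and t: "t \<in> f X" "t \<in> f Y"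
  shows "t \<in> f (X \<inter> Y)"
proof (rule ccontr)
  assume nt: "t \<notin> f (X \<inter> Y)"
  have tP: "t \<in> Add_conds L" using t f_sub X by blast
  obtain q where q: "q \<in> Add_conds L" "Add_le q t" "\<forall>s\<in>f (X \<inter> Y). \<not> Add_le s q"
    using ro_notin[OF fRO tP nt] X by blast
  have "cone L q \<subseteq> f X" "cone L q \<subseteq> f Y"
    using q t f_down X Y Add_le_trans unfolding cone_def by blast+
  hence "Zc q - X \<in> I" "Zc q - Y \<in> I" using fiso[of "Zc q" X] fiso[of "Zc q" Y] Zc[OF q(1)] X Y by auto
  hence "Zc q - (X \<inter> Y) \<in> I" using unI by (simp add: Diff_Int)
  hence "cone L q \<subseteq> f (X \<inter> Y)" using fiso[of "Zc q" "X \<inter> Y"] Zc[OF q(1)] X by auto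
  moreover have "q \<in> cone L q" using q Add_le_refl unfolding cone_def by blast
  ultimately show False using q(3) Add_le_refl by blast
qed

lemma f_nonempty_inter:
  assumes "X \<subseteq> K" "Y \<subseteq> K" "t \<in> f X" "t \<in> f Y" shows "X \<inter> Y \<noteq> {}"
  using f_int[OF assms] f_empty by auto

lemma f_pos_inter:
  assumes "X \<subseteq> K" "Y \<subseteq> K" "t \<in> f X" "t \<in> f Y" shows "X \<inter> Y \<notin> I"
proof
  assume "X \<inter> Y \<in> I"
  hence "f (X \<inter> Y) \<subseteq> f {}" using fiso[of "X \<inter> Y" "{}"] assms(1) by auto
  thus False using f_int[OF assms] f_empty by auto
qed

lemma cover:
  assumes AK: "A \<subseteq> K" and BK: "B \<subseteq> K"
    and G: "\<And>Y. fst Y \<subseteq> A \<Longrightarrow> snd Y \<subseteq> B \<Longrightarrow> fst Y \<notin> I \<Longrightarrow> snd Y \<notin> I \<Longrightarrow>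
       fst (G Y) \<subseteq> fst Y \<and> snd (G Y) \<subseteq> snd Y \<and> fst (G Y) \<notin> I \<and> snd (G Y) \<notin> I"
  shows "\<exists>YS N. countable YS \<and> (\<forall>Y\<in>YS. fst Y \<subseteq> A \<and> snd Y \<subseteq> B \<and> fst Y \<notin> I \<and> snd Y \<notin> I)
     \<and> N \<in> I \<and> (\<forall>\<alpha>\<in>A - N. {\<beta>\<in>B. \<not>(\<exists>Y\<in>YS. \<alpha> \<in> fst (G Y) \<and> \<beta> \<in> snd (G Y))} \<in> I)"
proof -
  define resp where "resp a b = (A \<inter> Zc a, B \<inter> Zc b)" for a b
  define legR where "legR a b \<longleftrightarrow> a \<in> Add_conds L \<and> b \<in> Add_conds L \<and> A \<inter> Zc a \<notin> I \<and> B \<inter> Zc b \<notin> I" for a b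
  have GR: "fst (G (resp a b)) \<subseteq> A \<inter> Zc a \<and> snd (G (resp a b)) \<subseteq> B \<inter> Zc b \<and>
      fst (G (resp a b)) \<notin> I \<and> snd (G (resp a b)) \<notin> I" if "legR a b" for a b
    using G[of "resp a b"] that unfolding resp_def legR_def by auto
  have GK: "fst (G (resp a b)) \<subseteq> K" "snd (G (resp a b)) \<subseteq> K" if "legR a b" for a b
    using GR[OF that] AK BK by auto
  define e where "e a b = (SOME t. t \<in> f (fst (G (resp a b))))" for a b
  define e' where "e' a b = (SOME t. t \<in> f (snd (G (resp a b))))" for a b
  have eprop: "e a b \<in> f (fst (G (resp a b)))" "e' a b \<in> f (snd (G (resp a b)))" if "legR a b" for a b
  proof -
    show "e a b \<in> f (fst (G (resp a b)))" unfolding e_def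
      using f_pos[OF GK(1)[OF that]] GR[OF that] some_in_eq by blast
    show "e' a b \<in> f (snd (G (resp a b)))" unfolding e'_def
      using f_pos[OF GK(2)[OF that]] GR[OF that] some_in_eq by blast
  qed
  have eP: "e a b \<in> Add_conds L" "e' a b \<in> Add_conds L" if "legR a b" for a b
    using eprop[OF that] f_sub GK[OF that] by blast+
  define Q where "Q S = {(a,b). a \<in> PS L S \<and> b \<in> PS L S \<and> legR a b}" for S
  define Fam where "Fam S = (\<lambda>(a,b). fst ` dom (e a b) \<union> fst ` dom (e' a b)) ` Q S" for S
  define g where "g S = S \<union> \<Union>(Fam S)" for S
  define Sg where "Sg n = (g ^^ n) {}" for n
  define Sig where "Sig = (\<Union>n. Sg n)"
  have SgSuc: "Sg (Suc n) = g (Sg n)" for n unfolding Sg_def by simp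
  have Sg_inc: "Sg n \<subseteq> Sg (Suc n)" for n unfolding SgSuc g_def by (rule Un_upper1)
  have Qcount: "countable (Q S)" if "countable S" for S
  proof -
    have "Q S \<subseteq> PS L S \<times> PS L S" unfolding Q_def by blast
    moreover have "countable (PS L S \<times> PS L S)" using countable_PS[OF that] by simp
    ultimately show ?thesis using countable_subset by blast
  qed
  have gcount: "countable (g S)" if cS: "countable S" for S
  proof -
    have "countable (Fam S)" unfolding Fam_def using Qcount[OF cS] by simp
    moreover have "countable X" if H: "X \<in> Fam S" for X
    proof -
      obtain a b where ab: "(a,b) \<in> Q S" "X = fst ` dom (e a b) \<union> fst ` dom (e' a b)"
        using H unfolding Fam_def by auto
      have "legR a b" using ab(1) unfolding Q_def by blast
      hence "finite (dom (e a b))" "finite (dom (e' a b))" using eP unfolding Add_conds_def by blast+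
      thus ?thesis using ab(2) by (simp add: countable_finite)
    qed
    ultimately have "countable (\<Union>X\<in>Fam S. X)" by (rule countable_UN)
    thus ?thesis unfolding g_def using cS by simp
  qed
  have Sg_count: "countable (Sg n)" for n
  proof (induction n)
    case 0 thus ?case unfolding Sg_def by simp
  next
    case (Suc n) thus ?case unfolding SgSuc by (rule gcount)
  qed
  have Sig_count: "countable Sig" unfolding Sig_def using Sg_count by blast
  have stage: "\<exists>n. a \<in> PS L (Sg n) \<and> b \<in> PS L (Sg n)" if H: "a \<in> PS L Sig" "b \<in> PS L Sig" for a b
  proof -
    have fin: "finite (fst ` dom a \<union> fst ` dom b)" using H unfolding PS_def Add_conds_def by blast
    have "fst ` dom a \<union> fst ` dom b \<subseteq> Sig" using H unfolding PS_def by auto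
    hence "fst ` dom a \<union> fst ` dom b \<subseteq> (\<Union>n. Sg n)" unfolding Sig_def .
    then obtain n where n: "fst ` dom a \<union> fst ` dom b \<subseteq> Sg n" using chain_fin[of Sg, OF Sg_inc fin] by blast
    hence "dom a \<subseteq> Sg n \<times> UNIV" "dom b \<subseteq> Sg n \<times> UNIV"
      using fst_sub[of "dom a" "Sg n"] fst_sub[of "dom b" "Sg n"] by blast+
    hence "a \<in> PS L (Sg n) \<and> b \<in> PS L (Sg n)" using H unfolding PS_def by blast
    thus ?thesis by blast
  qed
  have edom: "dom (e a b) \<subseteq> Sig \<times> UNIV \<and> dom (e' a b) \<subseteq> Sig \<times> UNIV"
    if H: "a \<in> PS L Sig" "b \<in> PS L Sig" "legR a b" for a b
  proof -
    obtain n where n: "a \<in> PS L (Sg n)" "b \<in> PS L (Sg n)" using stage[OF H(1,2)] by blast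
    have abQ: "(a,b) \<in> Q (Sg n)" unfolding Q_def using n H(3) by blast
    have "fst ` dom (e a b) \<union> fst ` dom (e' a b) \<in> Fam (Sg n)" unfolding Fam_def
      by (rule rev_image_eqI[OF abQ]) simp
    hence "fst ` dom (e a b) \<union> fst ` dom (e' a b) \<subseteq> g (Sg n)" unfolding g_def by blast
    moreover have "g (Sg n) \<subseteq> Sig" unfolding SgSuc[symmetric] Sig_def by blast
    ultimately have "fst ` dom (e a b) \<subseteq> Sig" "fst ` dom (e' a b) \<subseteq> Sig" by blast+
    thus ?thesis using fst_sub[of "dom (e a b)" Sig] fst_sub[of "dom (e' a b)" Sig] by blast
  qed
  define YS where "YS = (\<lambda>(a,b). resp a b) ` Q Sig"
  have YS_count: "countable YS" unfolding YS_def using Qcount[OF Sig_count] by simp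
  have YS_legal: "\<forall>Y\<in>YS. fst Y \<subseteq> A \<and> snd Y \<subseteq> B \<and> fst Y \<notin> I \<and> snd Y \<notin> I"
  proof
    fix Y assume "Y \<in> YS"
    then obtain a b where ab: "(a,b) \<in> Q Sig" "Y = resp a b" unfolding YS_def by auto
    have "legR a b" using ab(1) unfolding Q_def by blast
    thus "fst Y \<subseteq> A \<and> snd Y \<subseteq> B \<and> fst Y \<notin> I \<and> snd Y \<notin> I"
      using ab(2) unfolding resp_def legR_def by simp
  qed
  define A' where "A' a b = fst (G (resp a b)) \<inter> Zc (e a b)" for a b
  define B' where "B' a b = snd (G (resp a b)) \<inter> Zc (e' a b)" for a b
  define C where "C \<alpha> = B - \<Union>{B' a b | a b. (a,b) \<in> Q Sig \<and> \<alpha> \<in> A' a b}" for \<alpha>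
  define N where "N = {\<alpha>\<in>A. C \<alpha> \<notin> I}"
  have CK: "C \<alpha> \<subseteq> K" for \<alpha> unfolding C_def using BK by blast
  have NI: "N \<in> I"
  proof (rule ccontr)
    assume Npos: "N \<notin> I"
    define q where "q \<alpha> = (SOME t. t \<in> f (C \<alpha>))" for \<alpha>
    have qC: "q \<alpha> \<in> f (C \<alpha>)" if H: "\<alpha> \<in> N" for \<alpha>
    proof -
      have "C \<alpha> \<notin> I" using H unfolding N_def by blast
      hence "f (C \<alpha>) \<noteq> {}" using f_pos[OF CK] by blast
      thus ?thesis unfolding q_def using some_in_eq by blast
    qed
    have qP: "q \<alpha> \<in> Add_conds L" if H: "\<alpha> \<in> N" for \<alpha> using qC[OF H] f_sub[OF CK] by blast
    define pp where "pp \<alpha> = q \<alpha> |` (Sig \<times> UNIV)" for \<alpha>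
    have ppPS: "pp \<alpha> \<in> PS L Sig" if H: "\<alpha> \<in> N" for \<alpha>
      unfolding pp_def by (rule restr_PS(1)[OF qP[OF H]])
    have "\<exists>p\<in>PS L Sig. {\<alpha>\<in>N. pp \<alpha> = p} \<notin> I"
    proof (rule ccontr)
      assume "\<not> (\<exists>p\<in>PS L Sig. {\<alpha>\<in>N. pp \<alpha> = p} \<notin> I)"
      hence sub: "(\<lambda>p. {\<alpha>\<in>N. pp \<alpha> = p}) ` PS L Sig \<subseteq> I" by blast
      have "\<Union>((\<lambda>p. {\<alpha>\<in>N. pp \<alpha> = p}) ` PS L Sig) \<in> I"
        by (rule ccI[OF countable_image[OF countable_PS[OF Sig_count]] sub])
      moreover have "N \<subseteq> \<Union>((\<lambda>p. {\<alpha>\<in>N. pp \<alpha> = p}) ` PS L Sig)" using ppPS by blast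
      ultimately show False using downI Npos by blast
    qed
    then obtain p where pPS: "p \<in> PS L Sig" and X'pos0: "{\<alpha>\<in>N. pp \<alpha> = p} \<notin> I" by blast
    define X' where "X' = {\<alpha>\<in>N. pp \<alpha> = p}"
    have X'pos: "X' \<notin> I" using X'pos0 unfolding X'_def .
    have X'A: "X' \<subseteq> A" unfolding X'_def N_def by blast
    have X'K: "X' \<subseteq> K" using X'A AK by blast
    have "X' \<noteq> {}" using X'pos emptyI by auto
    then obtain \<alpha>0 where a0: "\<alpha>0 \<in> X'" by blast
    have "f X' \<noteq> {}" using f_pos[OF X'K X'pos] .
    then obtain r0 where r0: "r0 \<in> f X'" by blast
    have r0P: "r0 \<in> Add_conds L" using r0 f_sub[OF X'K] by blast
    define a where "a = r0 |` (Sig \<times> UNIV)"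
    have aPS: "a \<in> PS L Sig" unfolding a_def by (rule restr_PS(1)[OF r0P])
    have aP: "a \<in> Add_conds L" "p \<in> Add_conds L" using aPS pPS unfolding PS_def by auto
    have r0a: "Add_le r0 a" unfolding a_def by (rule restr_PS(2)[OF r0P])
    have r0A: "r0 \<in> f A" using f_mono[OF X'A AK] r0 by blast
    have r0Z: "r0 \<in> f (Zc a)" using Zc(2)[OF aP(1)] r0P r0a unfolding cone_def by blast
    have legA: "A \<inter> Zc a \<notin> I" by (rule f_pos_inter[OF AK Zc(1)[OF aP(1)] r0A r0Z])
    have a0N: "\<alpha>0 \<in> N" and ppa0: "pp \<alpha>0 = p" using a0 unfolding X'_def by auto
    have CB: "C \<alpha>0 \<subseteq> B" unfolding C_def by blast
    have qa0B: "q \<alpha>0 \<in> f B" using qC[OF a0N] f_mono[OF CB BK] by blast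
    have "Add_le (q \<alpha>0) p" using restr_PS(2)[where S=Sig, OF qP[OF a0N]] ppa0 unfolding pp_def by simp
    hence qa0Z: "q \<alpha>0 \<in> f (Zc p)" using Zc(2)[OF aP(2)] qP[OF a0N] unfolding cone_def by blast
    have legB: "B \<inter> Zc p \<notin> I" by (rule f_pos_inter[OF BK Zc(1)[OF aP(2)] qa0B qa0Z])
    have leg: "legR a p" unfolding legR_def using aP legA legB by blast
    have apQ: "(a,p) \<in> Q Sig" unfolding Q_def using aPS pPS leg by blast
    note GRap = GR[OF leg]
    define E0 where "E0 = e a p"
    define E1 where "E1 = e' a p"
    have E0f: "E0 \<in> f (fst (G (resp a p)))" and E1f: "E1 \<in> f (snd (G (resp a p)))"
      unfolding E0_def E1_def using eprop[OF leg] by auto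
    have E0P: "E0 \<in> Add_conds L" and E1P: "E1 \<in> Add_conds L"
      unfolding E0_def E1_def using eP[OF leg] by auto
    have E0dom: "dom E0 \<subseteq> Sig \<times> UNIV" and E1dom: "dom E1 \<subseteq> Sig \<times> UNIV"
      unfolding E0_def E1_def using edom[OF aPS pPS leg] by auto
    have "fst (G (resp a p)) \<subseteq> Zc a" using GRap by blast
    hence "E0 \<in> f (Zc a)" using f_mono[OF _ Zc(1)[OF aP(1)]] E0f by blast
    hence "Add_le E0 a" using Zc(2)[OF aP(1)] unfolding cone_def by blast
    hence restr0: "r0 |` (Sig \<times> UNIV) \<subseteq>\<^sub>m E0" unfolding a_def Add_le_def .
    note c0 = comb[OF r0P E0P restr0 E0dom]
    have tX: "r0 ++ E0 \<in> f X'" by (rule f_down[OF X'K r0 c0(1) c0(3)])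
    have A'K: "A' a p \<subseteq> K" unfolding A'_def using GK(1)[OF leg] by blast
    have E0Z: "E0 \<in> f (Zc E0)" using Zc(2)[OF E0P] E0P Add_le_refl unfolding cone_def by blast
    have E0A': "E0 \<in> f (A' a p)" unfolding A'_def E0_def
      using f_int[OF GK(1)[OF leg] Zc(1)[OF E0P] E0f E0Z] unfolding E0_def .
    have tA': "r0 ++ E0 \<in> f (A' a p)" by (rule f_down[OF A'K E0A' c0(1) c0(2)])
    have "X' \<inter> A' a p \<noteq> {}" by (rule f_nonempty_inter[OF X'K A'K tX tA'])
    then obtain \<alpha>1 where a1: "\<alpha>1 \<in> X'" "\<alpha>1 \<in> A' a p" by blast
    have a1N: "\<alpha>1 \<in> N" and ppa1: "pp \<alpha>1 = p" using a1(1) unfolding X'_def by auto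
    have "snd (G (resp a p)) \<subseteq> Zc p" using GRap by blast
    hence "E1 \<in> f (Zc p)" using f_mono[OF _ Zc(1)[OF aP(2)]] E1f by blast
    hence "Add_le E1 p" using Zc(2)[OF aP(2)] unfolding cone_def by blast
    hence restr1: "q \<alpha>1 |` (Sig \<times> UNIV) \<subseteq>\<^sub>m E1" using ppa1 unfolding pp_def Add_le_def by simp
    note c1 = comb[OF qP[OF a1N] E1P restr1 E1dom]
    have sC: "q \<alpha>1 ++ E1 \<in> f (C \<alpha>1)" by (rule f_down[OF CK qC[OF a1N] c1(1) c1(3)])
    have B'K: "B' a p \<subseteq> K" unfolding B'_def using GK(2)[OF leg] by blast
    have E1Z: "E1 \<in> f (Zc E1)" using Zc(2)[OF E1P] E1P Add_le_refl unfolding cone_def by blast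
    have E1B': "E1 \<in> f (B' a p)" unfolding B'_def
      using f_int[OF GK(2)[OF leg] Zc(1)[OF E1P] E1f E1Z] unfolding E1_def .
    have sB': "q \<alpha>1 ++ E1 \<in> f (B' a p)" by (rule f_down[OF B'K E1B' c1(1) c1(2)])
    have "C \<alpha>1 \<inter> B' a p \<noteq> {}" by (rule f_nonempty_inter[OF CK B'K sC sB'])
    moreover have "C \<alpha>1 \<inter> B' a p = {}" unfolding C_def using apQ a1(2) by blast
    ultimately show False by blast
  qed
  have "{\<beta>\<in>B. \<not>(\<exists>Y\<in>YS. \<alpha> \<in> fst (G Y) \<and> \<beta> \<in> snd (G Y))} \<in> I" if H: "\<alpha> \<in> A - N" for \<alpha>
  proof -
    have "C \<alpha> \<in> I" using H unfolding N_def by blast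
    moreover have "{\<beta>\<in>B. \<not>(\<exists>Y\<in>YS. \<alpha> \<in> fst (G Y) \<and> \<beta> \<in> snd (G Y))} \<subseteq> C \<alpha>"
    proof
      fix \<beta> assume b: "\<beta> \<in> {\<beta>\<in>B. \<not>(\<exists>Y\<in>YS. \<alpha> \<in> fst (G Y) \<and> \<beta> \<in> snd (G Y))}"
      show "\<beta> \<in> C \<alpha>"
      proof (rule ccontr)
        assume "\<beta> \<notin> C \<alpha>"
        then obtain a b' where ab: "(a,b') \<in> Q Sig" "\<alpha> \<in> A' a b'" "\<beta> \<in> B' a b'"
          using b unfolding C_def by blast
        have "resp a b' \<in> YS" unfolding YS_def using ab(1) by (rule rev_image_eqI) simp
        moreover have "\<alpha> \<in> fst (G (resp a b'))" "\<beta> \<in> snd (G (resp a b'))"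
          using ab unfolding A'_def B'_def by blast+
        ultimately show False using b by blast
      qed
    qed
    ultimately show ?thesis using downI by blast
  qed
  thus ?thesis using YS_count YS_legal NI by blast
qed

end


lemma legal_history_snoc:
  "legal_history r I (h @ [m]) \<longleftrightarrow> legal_history r I h \<and> legal_move r I h m"
proof -
  have "legal_history r I (h @ [m]) \<longleftrightarrow>
     (\<forall>n < Suc (length h). legal_move r I (take n (h @ [m])) ((h @ [m]) ! n))"
    unfolding legal_history_def by simp
  also have "\<dots> \<longleftrightarrow> (\<forall>n < length h. legal_move r I (take n (h @ [m])) ((h @ [m]) ! n))
      \<and> legal_move r I (take (length h) (h @ [m])) ((h @ [m]) ! length h)"
    using less_Suc_eq by auto
  also have "\<dots> \<longleftrightarrow> legal_history r I h \<and> legal_move r I h m"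
    unfolding legal_history_def by (simp add: nth_append)
  finally show ?thesis .
qed

lemma follows_snoc:
  "follows_history \<sigma> (h @ [m]) \<longleftrightarrow> follows_history \<sigma> h \<and> (even (length h) \<longrightarrow> m = \<sigma> h)"
proof -
  have "follows_history \<sigma> (h @ [m]) \<longleftrightarrow>
     (\<forall>n < Suc (length h). even n \<longrightarrow> (h @ [m]) ! n = \<sigma> (take n (h @ [m])))"
    unfolding follows_history_def by simp
  also have "\<dots> \<longleftrightarrow> (\<forall>n < length h. even n \<longrightarrow> (h @ [m]) ! n = \<sigma> (take n (h @ [m])))
      \<and> (even (length h) \<longrightarrow> (h @ [m]) ! length h = \<sigma> (take (length h) (h @ [m])))"
    using less_Suc_eq by auto
  also have "\<dots> \<longleftrightarrow> follows_history \<sigma> h \<and> (even (length h) \<longrightarrow> m = \<sigma> h)"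
    unfolding follows_history_def by (simp add: nth_append)
  finally show ?thesis .
qed

primrec lev :: "('x list \<Rightarrow> 'x) \<Rightarrow> ('x list \<Rightarrow> 'x set) \<Rightarrow> nat \<Rightarrow> 'x list set" where
  "lev \<sigma> Y 0 = {[\<sigma> []]}"
| "lev \<sigma> Y (Suc n) = (\<Union>h\<in>lev \<sigma> Y n. (\<lambda>y. h @ [y, \<sigma> (h @ [y])]) ` Y h)"

primrec pth :: "('x list \<Rightarrow> 'x) \<Rightarrow> ('x list \<Rightarrow> 'x set) \<Rightarrow> ('x list \<Rightarrow> bool) \<Rightarrow> nat \<Rightarrow> 'x list" where
  "pth \<sigma> Y P 0 = [\<sigma> []]"
| "pth \<sigma> Y P (Suc n) = (SOME h'. \<exists>y\<in>Y (pth \<sigma> Y P n). h' = pth \<sigma> Y P n @ [y, \<sigma> (pth \<sigma> Y P n @ [y])] \<and> P h')"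

lemma lev_count: "(\<And>h. countable (Y h)) \<Longrightarrow> countable (lev \<sigma> Y n)"
  by (induction n) auto

lemma strict_lt_of:
  assumes "Card_order r" "a \<in> Field r" "b \<in> Field r" "b \<notin> under r a"
  shows "strict_lt r a b"
proof -
  have wo: "well_order_on (Field r) r" using assms(1) unfolding card_order_on_def by blast
  hence "total_on (Field r) r" "refl_on (Field r) r"
    unfolding well_order_on_def linear_order_on_def partial_order_on_def preorder_on_def by blast+
  moreover have "(b, a) \<notin> r" using assms(4) unfolding under_def by blast
  ultimately show ?thesis using assms(2,3) unfolding strict_lt_def total_on_def refl_on_def by metis
qed


theorem mainTheorem7:
  fixes r :: "'a rel" and I :: "'a set set" and L :: "'l set"
  assumes "Card_order r" and "regularCard r" and "(natLeq, r) \<in> ordLess"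
    and "ideal_on r I" and "kappa_complete r I" and "normal_ideal r I"
    and "quotient_iso (Field r) I (RO (Add_conds L) Add_le)"
  shows "two_precipitous r I"
proof -
  note CO = assms(1) and unc = assms(3) and idl = assms(4) and kc = assms(5)
  obtain f where f1: "\<forall>A \<subseteq> Field r. f A \<in> RO (Add_conds L) Add_le"
    and f2: "\<forall>U \<in> RO (Add_conds L) Add_le. \<exists>A \<subseteq> Field r. f A = U"
    and f3: "\<forall>A B. A \<subseteq> Field r \<and> B \<subseteq> Field r \<longrightarrow> (A - B \<in> I \<longleftrightarrow> f A \<subseteq> f B)"
    using assms(7) unfolding quotient_iso_def by blast
  interpret cs: cohen_setup "Field r" I L f
  proof
    show "{} \<in> I" using idl unfolding ideal_on_def by blast
    show "\<And>A B. A \<in> I \<Longrightarrow> B \<subseteq> A \<Longrightarrow> B \<in> I" using idl unfolding ideal_on_def by blast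
    show "\<And>A B. A \<in> I \<Longrightarrow> B \<in> I \<Longrightarrow> A \<union> B \<in> I" using idl unfolding ideal_on_def by blast
    show "\<And>F. countable F \<Longrightarrow> F \<subseteq> I \<Longrightarrow> \<Union>F \<in> I" using ccI[OF kc unc] by blast
    show "\<And>X. X \<subseteq> Field r \<Longrightarrow> regular_open (Add_conds L) Add_le (f X)" using f1 unfolding RO_def by blast
    show "\<And>U. regular_open (Add_conds L) Add_le U \<Longrightarrow> \<exists>X\<subseteq>Field r. f X = U" using f2 unfolding RO_def by blast
    show "\<And>X Y. X \<subseteq> Field r \<Longrightarrow> Y \<subseteq> Field r \<Longrightarrow> (X - Y \<in> I) = (f X \<subseteq> f Y)" using f3 by blast
  qed
  have emptyI: "{} \<in> I" and downI: "\<And>A B. A \<in> I \<Longrightarrow> B \<subseteq> A \<Longrightarrow> B \<in> I"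
    and unI: "\<And>A B. A \<in> I \<Longrightarrow> B \<in> I \<Longrightarrow> A \<union> B \<in> I"
    using idl unfolding ideal_on_def by blast+
  have ccI': "\<And>F. countable F \<Longrightarrow> F \<subseteq> I \<Longrightarrow> \<Union>F \<in> I" using ccI[OF kc unc] by blast
  show ?thesis unfolding two_precipitous_def
  proof
    assume "\<exists>\<sigma>. empty_winning_strategy r I \<sigma>"
    then obtain \<sigma> where ews: "empty_winning_strategy r I \<sigma>" by blast
    have S1: "\<And>h. legal_history r I h \<Longrightarrow> follows_history \<sigma> h \<Longrightarrow> even (length h) \<Longrightarrow> legal_move r I h (\<sigma> h)"
      using ews unfolding empty_winning_strategy_def by blast
    have S2: "\<And>play. (\<forall>n. legal_move r I (map play [0..<n]) (play n)) \<Longrightarrow>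
             (\<forall>n. even n \<longrightarrow> play n = \<sigma> (map play [0..<n])) \<Longrightarrow> \<not> nonempty_wins r play"
      using ews unfolding empty_winning_strategy_def by blast
    define node where "node h \<longleftrightarrow> legal_history r I h \<and> follows_history \<sigma> h \<and> odd (length h)" for h
    have step: "node (h @ [Y, \<sigma> (h @ [Y])]) \<and> legal_move r I (h @ [Y]) (\<sigma> (h @ [Y]))"
      if H: "node h" "legal_move r I h Y" for h Y
    proof -
      have lh: "legal_history r I (h @ [Y])" using H unfolding node_def legal_history_snoc by blast
      have fh: "follows_history \<sigma> (h @ [Y])" using H unfolding node_def follows_snoc by simp
      have ev: "even (length (h @ [Y]))" using H unfolding node_def by simp
      have lm: "legal_move r I (h @ [Y]) (\<sigma> (h @ [Y]))" using S1[OF lh fh ev] .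
      have "legal_history r I ((h @ [Y]) @ [\<sigma> (h @ [Y])])" using lh lm legal_history_snoc by blast
      moreover have "follows_history \<sigma> ((h @ [Y]) @ [\<sigma> (h @ [Y])])" using fh ev follows_snoc by blast
      moreover have "odd (length ((h @ [Y]) @ [\<sigma> (h @ [Y])]))" using ev by simp
      ultimately show ?thesis using lm unfolding node_def by simp
    qed
    have lastK: "fst (last h) \<subseteq> Field r \<and> snd (last h) \<subseteq> Field r \<and> fst (last h) \<notin> I \<and> snd (last h) \<notin> I"
      if H: "node h" for h
    proof -
      have ne: "h \<noteq> []" using H unfolding node_def by auto
      hence "legal_move r I (take (length h - 1) h) (h ! (length h - 1))"
        using H unfolding node_def legal_history_def by simp
      moreover have "h ! (length h - 1) = last h" using ne by (simp add: last_conv_nth)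
      ultimately show ?thesis unfolding legal_move_def by simp
    qed
    have nodecov: "\<exists>YS N. countable YS \<and> (\<forall>Y\<in>YS. legal_move r I h Y) \<and> N \<in> I \<and>
        (\<forall>\<alpha>\<in>fst (last h) - N. {\<beta>\<in>snd (last h). \<not>(\<exists>Y\<in>YS. \<alpha> \<in> fst (\<sigma> (h @ [Y])) \<and> \<beta> \<in> snd (\<sigma> (h @ [Y])))} \<in> I)"
      if H: "node h" for h
    proof -
      note lk = lastK[OF H]
      have ne: "h \<noteq> []" using H unfolding node_def by auto
      have legY: "legal_move r I h Y" if "fst Y \<subseteq> fst (last h)" "snd Y \<subseteq> snd (last h)" "fst Y \<notin> I" "snd Y \<notin> I" for Y
        using that lk ne unfolding legal_move_def by blast
      have G: "fst (\<sigma> (h @ [Y])) \<subseteq> fst Y \<and> snd (\<sigma> (h @ [Y])) \<subseteq> snd Y \<and> fst (\<sigma> (h @ [Y])) \<notin> I \<and> snd (\<sigma> (h @ [Y])) \<notin> I"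
        if "fst Y \<subseteq> fst (last h)" "snd Y \<subseteq> snd (last h)" "fst Y \<notin> I" "snd Y \<notin> I" for Y
        using step[OF H legY[OF that]] unfolding legal_move_def by simp
      have AK: "fst (last h) \<subseteq> Field r" and BK: "snd (last h) \<subseteq> Field r" using lk by auto
      obtain YS N where YN1: "countable YS"
        and YN2: "\<forall>Y\<in>YS. fst Y \<subseteq> fst (last h) \<and> snd Y \<subseteq> snd (last h) \<and> fst Y \<notin> I \<and> snd Y \<notin> I"
        and YN3: "N \<in> I"
        and YN4: "\<forall>\<alpha>\<in>fst (last h) - N. {\<beta>\<in>snd (last h). \<not>(\<exists>Y\<in>YS. \<alpha> \<in> fst (\<sigma> (h @ [Y])) \<and> \<beta> \<in> snd (\<sigma> (h @ [Y])))} \<in> I"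
        using cs.cover[OF AK BK G] by blast
      have "\<forall>Y\<in>YS. legal_move r I h Y"
      proof
        fix Y assume "Y \<in> YS"
        hence "fst Y \<subseteq> fst (last h)" "snd Y \<subseteq> snd (last h)" "fst Y \<notin> I" "snd Y \<notin> I" using YN2 by auto
        thus "legal_move r I h Y" by (rule legY)
      qed
      thus ?thesis using YN1 YN3 YN4 by blast
    qed
    define Qp where "Qp h YS N \<longleftrightarrow> countable YS \<and> (\<forall>Y\<in>YS. legal_move r I h Y) \<and> N \<in> I \<and>
        (\<forall>\<alpha>\<in>fst (last h) - N. {\<beta>\<in>snd (last h). \<not>(\<exists>Y\<in>YS. \<alpha> \<in> fst (\<sigma> (h @ [Y])) \<and> \<beta> \<in> snd (\<sigma> (h @ [Y])))} \<in> I)" for h YS N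
    define YN where "YN h = (SOME p. Qp h (fst p) (snd p))" for h
    have YN: "countable (fst (YN h)) \<and> (\<forall>Y\<in>fst (YN h). legal_move r I h Y) \<and> snd (YN h) \<in> I \<and>
        (\<forall>\<alpha>\<in>fst (last h) - snd (YN h). {\<beta>\<in>snd (last h). \<not>(\<exists>Y\<in>fst (YN h). \<alpha> \<in> fst (\<sigma> (h @ [Y])) \<and> \<beta> \<in> snd (\<sigma> (h @ [Y])))} \<in> I)"
      if H: "node h" for h
    proof -
      obtain YS N where "Qp h YS N" using nodecov[OF H] unfolding Qp_def by blast
      hence "\<exists>p. Qp h (fst p) (snd p)" by (intro exI[of _ "(YS, N)"]) simp
      hence "Qp h (fst (YN h)) (snd (YN h))" unfolding YN_def by (rule someI_ex)
      thus ?thesis unfolding Qp_def .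
    qed
    define YSf where "YSf h = (if node h then fst (YN h) else {})" for h
    define Nf where "Nf h = snd (YN h)" for h
    have YSf_count: "countable (YSf h)" for h unfolding YSf_def using YN by auto
    have root: "node [\<sigma> []]"
    proof -
      have "legal_move r I [] (\<sigma> [])" using S1[of "[]"] unfolding legal_history_def follows_history_def by simp
      hence "legal_history r I [\<sigma> []]" using legal_history_snoc[of r I "[]"] unfolding legal_history_def by simp
      moreover have "follows_history \<sigma> [\<sigma> []]" unfolding follows_history_def by simp
      ultimately show ?thesis unfolding node_def by simp
    qed
    have lev_node: "\<forall>h\<in>lev \<sigma> YSf n. node h" for n
    proof (induction n)
      case 0 thus ?case using root by simp
    next
      case (Suc n)
      show ?case
      proof
        fix h' assume "h' \<in> lev \<sigma> YSf (Suc n)"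
        then obtain h where h1: "h \<in> lev \<sigma> YSf n" and h2: "h' \<in> (\<lambda>y. h @ [y, \<sigma> (h @ [y])]) ` YSf h"
          unfolding lev.simps by blast
        then obtain y where y1: "y \<in> YSf h" and y2: "h' = h @ [y, \<sigma> (h @ [y])]" by blast
        note hy = h1 y1 y2
        have nh: "node h" using Suc.IH hy(1) by blast
        have "y \<in> fst (YN h)" using y1 nh unfolding YSf_def by simp
        hence "legal_move r I h y" using YN[OF nh] by blast
        thus "node h'" using step[OF nh] hy(3) by blast
      qed
    qed
    define T where "T = (\<Union>n. lev \<sigma> YSf n)"
    have T_count: "countable T" unfolding T_def
      by (rule countable_UN) (simp_all add: lev_count[OF YSf_count])
    have T_node: "node h" if H: "h \<in> T" for h
    proof -
      obtain n where "h \<in> lev \<sigma> YSf n" using H unfolding T_def by blast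
      thus ?thesis using lev_node[of n] by blast
    qed
    note lk0 = lastK[OF root]
    define A0 where "A0 = fst (\<sigma> [])"
    define B0 where "B0 = snd (\<sigma> [])"
    have A0: "A0 \<subseteq> Field r" "A0 \<notin> I" and B0: "B0 \<subseteq> Field r" "B0 \<notin> I"
      using lk0 unfolding A0_def B0_def by auto
    have "Nf h \<in> I" if H: "h \<in> T" for h
    proof -
      have "snd (YN h) \<in> I" using YN[OF T_node[OF H]] by blast
      thus ?thesis unfolding Nf_def .
    qed
    hence "Nf ` T \<subseteq> I" by blast
    hence NN: "\<Union>(Nf ` T) \<in> I" by (rule ccI'[OF countable_image[OF T_count]])
    have "\<not> A0 \<subseteq> \<Union>(Nf ` T)" using NN A0(2) downI by blast
    then obtain \<alpha> where al: "\<alpha> \<in> A0" "\<alpha> \<notin> \<Union>(Nf ` T)" by blast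
    have alF: "\<alpha> \<in> Field r" using al A0 by blast
    define Cset where "Cset h = (if \<alpha> \<in> fst (last h) then {\<beta>\<in>snd (last h). \<not>(\<exists>Y\<in>YSf h. \<alpha> \<in> fst (\<sigma> (h @ [Y])) \<and> \<beta> \<in> snd (\<sigma> (h @ [Y])))} else {})" for h
    have CsetI: "Cset h \<in> I" if H: "h \<in> T" for h
    proof (cases "\<alpha> \<in> fst (last h)")
      case True
      have nh: "node h" using T_node[OF H] .
      have "\<alpha> \<notin> Nf h" using al(2) H by blast
      hence "\<alpha> \<in> fst (last h) - snd (YN h)" using True unfolding Nf_def by blast
      hence "{\<beta>\<in>snd (last h). \<not>(\<exists>Y\<in>fst (YN h). \<alpha> \<in> fst (\<sigma> (h @ [Y])) \<and> \<beta> \<in> snd (\<sigma> (h @ [Y])))} \<in> I"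
        using YN[OF nh] by blast
      moreover have "YSf h = fst (YN h)" unfolding YSf_def using nh by simp
      ultimately show ?thesis unfolding Cset_def using True by simp
    next
      case False thus ?thesis unfolding Cset_def using emptyI by simp
    qed
    have "Cset ` T \<subseteq> I" using CsetI by blast
    hence "\<Union>(Cset ` T) \<in> I" by (rule ccI'[OF countable_image[OF T_count]])
    hence Bad: "\<Union>(Cset ` T) \<union> under r \<alpha> \<in> I" using unI bounded_in_I[OF CO kc idl alF] by blast
    have "\<not> B0 \<subseteq> \<Union>(Cset ` T) \<union> under r \<alpha>" using Bad B0(2) downI by blast
    then obtain \<beta> where be: "\<beta> \<in> B0" "\<beta> \<notin> \<Union>(Cset ` T)" "\<beta> \<notin> under r \<alpha>" by blast
    have slt: "strict_lt r \<alpha> \<beta>" using strict_lt_of[OF CO alF _ be(3)] be(1) B0 by blast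
    define P where "P h' \<longleftrightarrow> \<alpha> \<in> fst (last h') \<and> \<beta> \<in> snd (last h')" for h'
    define pp where "pp = pth \<sigma> YSf P"
    have sstep: "\<exists>y\<in>YSf (pp n). pp (Suc n) = pp n @ [y, \<sigma> (pp n @ [y])] \<and> P (pp (Suc n))"
      if H: "pp n \<in> lev \<sigma> YSf n" "P (pp n)" for n
    proof -
      define h where "h = pp n"
      have hT: "h \<in> T" unfolding T_def h_def using H(1) by blast
      have aL: "\<alpha> \<in> fst (last h)" and bL: "\<beta> \<in> snd (last h)" using H(2) unfolding P_def h_def by auto
      have "\<beta> \<notin> Cset h" using be(2) hT by blast
      hence "\<exists>Y\<in>YSf h. \<alpha> \<in> fst (\<sigma> (h @ [Y])) \<and> \<beta> \<in> snd (\<sigma> (h @ [Y]))" using aL bL unfolding Cset_def by auto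
      then obtain Y where Y: "Y \<in> YSf h" "\<alpha> \<in> fst (\<sigma> (h @ [Y]))" "\<beta> \<in> snd (\<sigma> (h @ [Y]))" by blast
      have "P (h @ [Y, \<sigma> (h @ [Y])])" using Y unfolding P_def by simp
      hence "\<exists>h'. \<exists>y\<in>YSf h. h' = h @ [y, \<sigma> (h @ [y])] \<and> P h'" using Y(1) by blast
      hence "\<exists>y\<in>YSf h. (SOME h'. \<exists>y\<in>YSf h. h' = h @ [y, \<sigma> (h @ [y])] \<and> P h') = h @ [y, \<sigma> (h @ [y])]
          \<and> P (SOME h'. \<exists>y\<in>YSf h. h' = h @ [y, \<sigma> (h @ [y])] \<and> P h')"
        by (rule someI_ex)
      moreover have "pp (Suc n) = (SOME h'. \<exists>y\<in>YSf h. h' = h @ [y, \<sigma> (h @ [y])] \<and> P h')"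
        unfolding pp_def h_def by simp
      ultimately show ?thesis unfolding h_def by simp
    qed
    have inv: "pp n \<in> lev \<sigma> YSf n \<and> P (pp n) \<and> length (pp n) = 2 * n + 1 \<and>
        (\<forall>k<length (pp n). \<alpha> \<in> fst (pp n ! k) \<and> \<beta> \<in> snd (pp n ! k))" for n
    proof (induction n)
      case 0
      have "pp 0 = [\<sigma> []]" unfolding pp_def by simp
      thus ?case using al(1) be(1) unfolding A0_def B0_def P_def by simp
    next
      case (Suc n)
      define h where "h = pp n"
      have IH: "h \<in> lev \<sigma> YSf n" "P h" "length h = 2 * n + 1"
        "\<forall>k<length h. \<alpha> \<in> fst (h ! k) \<and> \<beta> \<in> snd (h ! k)" using Suc.IH unfolding h_def by auto
      obtain y where y: "y \<in> YSf h" "pp (Suc n) = h @ [y, \<sigma> (h @ [y])]" "P (pp (Suc n))"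
        using sstep[OF IH(1,2)[unfolded h_def]] unfolding h_def by blast
      have nh: "node h" using lev_node IH(1) by blast
      have "y \<in> fst (YN h)" using y(1) nh unfolding YSf_def by simp
      hence lmy: "legal_move r I h y" using YN[OF nh] by blast
      have lms: "legal_move r I (h @ [y]) (\<sigma> (h @ [y]))" using step[OF nh lmy] by blast
      have Pl: "\<alpha> \<in> fst (\<sigma> (h @ [y]))" "\<beta> \<in> snd (\<sigma> (h @ [y]))" using y(2,3) unfolding P_def by auto
      hence Py: "\<alpha> \<in> fst y" "\<beta> \<in> snd y" using lms unfolding legal_move_def by auto
      have "pp (Suc n) \<in> lev \<sigma> YSf (Suc n)" unfolding y(2) lev.simps using IH(1) y(1) by blast
      moreover have "length (pp (Suc n)) = 2 * Suc n + 1" using y(2) IH(3) by simp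
      moreover have "\<forall>k<length (pp (Suc n)). \<alpha> \<in> fst (pp (Suc n) ! k) \<and> \<beta> \<in> snd (pp (Suc n) ! k)"
      proof (intro allI impI)
        fix k assume k: "k < length (pp (Suc n))"
        show "\<alpha> \<in> fst (pp (Suc n) ! k) \<and> \<beta> \<in> snd (pp (Suc n) ! k)"
        proof (cases "k < length h")
          case True thus ?thesis using IH(4) unfolding y(2) by (simp add: nth_append)
        next
          case False
          hence "k = length h \<or> k = Suc (length h)" using k y(2) by auto
          thus ?thesis using Py Pl unfolding y(2) by (auto simp: nth_append)
        qed
      qed
      ultimately show ?case using y(3) by blast
    qed
    have pref: "\<exists>t. pp m = pp n @ t" if H: "n \<le> m" for n m
      using H
    proof (induction m rule: dec_induct)
      case base thus ?case by blast
    next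
      case (step m)
      then obtain t where t: "pp m = pp n @ t" by blast
      obtain y where "pp (Suc m) = pp m @ [y, \<sigma> (pp m @ [y])]"
        using sstep[of m] inv[of m] by blast
      thus ?case using t by auto
    qed
    have nthpp: "pp m ! k = pp n ! k" if H: "k < length (pp n)" "n \<le> m" for k n m
    proof -
      obtain t where "pp m = pp n @ t" using pref[OF H(2)] by blast
      thus ?thesis using H(1) by (simp add: nth_append)
    qed
    define play where "play k = pp k ! k" for k
    have mp: "map play [0..<n] = take n (pp n)" for n
    proof (rule nth_equalityI)
      show "length (map play [0..<n]) = length (take n (pp n))" using inv[of n] by simp
    next
      fix i assume "i < length (map play [0..<n])"
      hence i: "i < n" by simp
      have "play i = pp n ! i" unfolding play_def using nthpp[of i i n] inv[of i] i by simp
      thus "map play [0..<n] ! i = take n (pp n) ! i" using i by simp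
    qed
    have "legal_move r I (map play [0..<n]) (play n)" for n
    proof -
      have "node (pp n)" using lev_node inv[of n] by blast
      hence "legal_history r I (pp n)" unfolding node_def by blast
      moreover have "n < length (pp n)" using inv[of n] by simp
      ultimately show ?thesis unfolding mp play_def legal_history_def by blast
    qed
    moreover have "play n = \<sigma> (map play [0..<n])" if "even n" for n
    proof -
      have "node (pp n)" using lev_node inv[of n] by blast
      hence "follows_history \<sigma> (pp n)" unfolding node_def by blast
      moreover have "n < length (pp n)" using inv[of n] by simp
      ultimately show ?thesis unfolding mp play_def follows_history_def using that by blast
    qed
    ultimately have nw: "\<not> nonempty_wins r play" using S2 by blast
    have "\<alpha> \<in> (\<Inter>n. fst (play n))" "\<beta> \<in> (\<Inter>n. snd (play n))"
      unfolding play_def using inv by auto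
    hence "nonempty_wins r play" unfolding nonempty_wins_def using slt by blast
    thus False using nw by blast
  qed
qed

end
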